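(* Let $I\subseteq\mathbb{R}$ be an interval, $X\subseteq I$, $q,r\ge0$, and let $f:X\to\mathbb{R}$ be strictly increasing or strictly decreasing. If every bounded gap of $X$ has length less than $q$ and every bounded gap of $f(X)$ has length less than $r$, then $f$ is $r$-continuous on $X$.
   Context: A gap of a set $X\subseteq\mathbb{R}$ is a nonempty interval $J\subseteq\mathbb{R}$ containing no point of $X$ such that no interval strictly containing $J$ has this property; its length is $\sup J-\inf J$. For $D\subseteq\mathbb{R}$, $f:D\to\mathbb{R}$ and $r\ge 0$: $f$ is $r$-continuous at $a\in D$ if for every $\varepsilon>0$ there is $\delta>0$ such that for all $x\in D$ with $|x-a|<\delta$ one has $|f(x)-f(a)|<r+\varepsilon$; $f$ is $r$-continuous on $D$ if it is $r$-continuous at every point of $D$. *)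

theory Defs
  imports "HOL-Analysis.Analysis"
begin

definition gap :: "real set \<Rightarrow> real set \<Rightarrow> bool" where
  "gap X J \<longleftrightarrow> J \<noteq> {} \<and> is_interval J \<and> J \<inter> X = {} \<and>
     (\<forall>J'. is_interval J' \<and> J' \<inter> X = {} \<and> J \<subseteq> J' \<longrightarrow> J' = J)"

definition gap_length :: "real set \<Rightarrow> real" where
  "gap_length J = Sup J - Inf J"

definition r_continuous_at :: "real set \<Rightarrow> (real \<Rightarrow> real) \<Rightarrow> real \<Rightarrow> real \<Rightarrow> bool" where
  "r_continuous_at D f r a \<longleftrightarrow>
     (\<forall>\<epsilon>>0. \<exists>\<delta>>0. \<forall>x\<in>D. \<bar>x - a\<bar> < \<delta> \<longrightarrow> \<bar>f x - f a\<bar> < r + \<epsilon>)"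

definition r_continuous_on :: "real set \<Rightarrow> (real \<Rightarrow> real) \<Rightarrow> real \<Rightarrow> bool" where
  "r_continuous_on D f r \<longleftrightarrow> (\<forall>a\<in>D. r_continuous_at D f r a)"

end

theory Submission
  imports Defs
begin

definition Hgap :: "real set \<Rightarrow> real \<Rightarrow> bool" where
  "Hgap Y r \<longleftrightarrow> (\<forall>u v c d. u \<in> Y \<and> v \<in> Y \<and> u \<le> c \<and> c < d \<and> d \<le> v \<and> {c<..<d} \<inter> Y = {} \<longrightarrow> d - c < r)"

lemma Hgap_from_test:
  fixes Y :: "real set"
  assumes "\<forall>J. gap Y J \<and> bounded J \<longrightarrow> gap_length J < r"
    and h: "u \<in> Y" "v \<in> Y" "u \<le> c" "c < d" "d \<le> v" "{c<..<d} \<inter> Y = {}"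
  shows "d - c < r"
proof -
  define m where "m = (c+d)/2"
  have mcd: "c < m" "m < d" using h by (auto simp: m_def)
  have Yout: "y \<le> c \<or> d \<le> y" if "y \<in> Y" for y
  proof -
    have "y \<notin> {c<..<d}" using h(6) that by blast
    then show ?thesis by auto
  qed
  define J where "J = {t. \<forall>y\<in>Y. y < min t m \<or> max t m < y}"
  have cdJ: "{c<..<d} \<subseteq> J"
  proof
    fix t assume t: "t \<in> {c<..<d}"
    have "y < min t m \<or> max t m < y" if "y \<in> Y" for y
      using Yout[OF that] t mcd by (auto simp: min_def max_def)
    then show "t \<in> J" unfolding J_def by blast
  qed
  have mJ: "m \<in> J" using cdJ mcd by auto
  have intJ: "is_interval J"
    unfolding is_interval_1
  proof (intro ballI allI impI)
    fix a b x assume a: "a \<in> J" and b: "b \<in> J" and x: "a \<le> x \<and> x \<le> b"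
    have "y < min x m \<or> max x m < y" if y: "y \<in> Y" for y
    proof -
      have 1: "y < min a m \<or> max a m < y" using a y unfolding J_def by blast
      have 2: "y < min b m \<or> max b m < y" using b y unfolding J_def by blast
      show ?thesis using 1 2 x unfolding min_def max_def by (smt (verit))
    qed
    then show "x \<in> J" unfolding J_def by blast
  qed
  have disj: "J \<inter> Y = {}"
  proof -
    have "x \<notin> Y" if "x \<in> J" for x
    proof
      assume "x \<in> Y"
      then have "x < min x m \<or> max x m < x" using that unfolding J_def by blast
      then show False unfolding min_def max_def by (smt (verit))
    qed
    then show ?thesis by blast
  qed
  have sub: "J \<subseteq> {u..v}"
  proof
    fix t assume t: "t \<in> J"
    have 1: "u < min t m \<or> max t m < u" "v < min t m \<or> max t m < v" using t h unfolding J_def by blast+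
    show "t \<in> {u..v}" using 1 h mcd unfolding min_def max_def atLeastAtMost_iff by (smt (verit))
  qed
  have bJ: "bounded J" using bounded_subset[OF bounded_closed_interval sub] .
  have maxJ: "\<forall>J'. is_interval J' \<and> J' \<inter> Y = {} \<and> J \<subseteq> J' \<longrightarrow> J' = J"
  proof (intro allI impI)
    fix J' assume J': "is_interval J' \<and> J' \<inter> Y = {} \<and> J \<subseteq> J'"
    have "J' \<subseteq> J"
    proof
      fix t assume t: "t \<in> J'"
      have mJ': "m \<in> J'" using mJ J' by blast
      have "y < min t m \<or> max t m < y" if y: "y \<in> Y" for y
      proof (rule ccontr)
        assume "\<not> (y < min t m \<or> max t m < y)"
        then have "min t m \<le> y" "y \<le> max t m" by auto
        have ivl: "\<And>a b x. a \<in> J' \<Longrightarrow> b \<in> J' \<Longrightarrow> a \<le> x \<Longrightarrow> x \<le> b \<Longrightarrow> x \<in> J'"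
          using J' unfolding is_interval_1 by blast
        have "y \<in> J'"
        proof (cases "t \<le> m")
          case True
          then have "t \<le> y" "y \<le> m" using \<open>min t m \<le> y\<close> \<open>y \<le> max t m\<close> by auto
          then show ?thesis using ivl[OF t mJ'] by blast
        next
          case False
          then have "m \<le> y" "y \<le> t" using \<open>min t m \<le> y\<close> \<open>y \<le> max t m\<close> by auto
          then show ?thesis using ivl[OF mJ' t] by blast
        qed
        then show False using J' y by blast
      qed
      then show "t \<in> J" unfolding J_def by blast
    qed
    then show "J' = J" using J' by blast
  qed
  have gJ: "gap Y J" unfolding gap_def using mJ intJ disj maxJ by blast
  have lt: "gap_length J < r" using assms(1) gJ bJ by blast
  have ne: "{c<..<d} \<noteq> {}" using h by auto
  have ba: "bdd_above J" using bdd_above_mono[OF bdd_above_Icc sub] .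
  have bb: "bdd_below J" using bdd_below_mono[OF bdd_below_Icc sub] .
  have "Sup {c<..<d} \<le> Sup J" by (rule cSup_subset_mono[OF ne ba cdJ])
  moreover have "Inf J \<le> Inf {c<..<d}" by (rule cInf_superset_mono[OF ne bb cdJ])
  ultimately have "d - c \<le> gap_length J" using h by (simp add: gap_length_def)
  then show "d - c < r" using lt by simp
qed

lemma Hgap_from:
  fixes Y :: "real set"
  assumes "\<forall>J. gap Y J \<and> bounded J \<longrightarrow> gap_length J < r"
  shows "Hgap Y r"
  unfolding Hgap_def using Hgap_from_test[OF assms] by blast

lemma Hgap_neg: "Hgap Y r \<Longrightarrow> Hgap (uminus ` Y) r"
  unfolding Hgap_def
proof (intro allI impI)
  fix u v c d
  assume H: "\<forall>u v c d. u \<in> Y \<and> v \<in> Y \<and> u \<le> c \<and> c < d \<and> d \<le> v \<and> {c<..<d} \<inter> Y = {} \<longrightarrow> d - c < r"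
    and h: "u \<in> uminus ` Y \<and> v \<in> uminus ` Y \<and> u \<le> c \<and> c < d \<and> d \<le> v \<and> {c<..<d} \<inter> uminus ` Y = {}"
  have "{-d<..<-c} \<inter> Y = {}"
  proof (rule ccontr)
    assume "{-d<..<-c} \<inter> Y \<noteq> {}"
    then obtain y where "y \<in> Y" "-d < y" "y < -c" by auto
    then have "-y \<in> {c<..<d} \<inter> uminus ` Y" by auto
    then show False using h by blast
  qed
  moreover have "-v \<in> Y" "-u \<in> Y" using h by auto
  ultimately have "(-c) - (-d) < r" using H[rule_format, of "-v" "-u" "-d" "-c"] h by auto
  then show "d - c < r" by simp
qed

lemma right_side:
  fixes X :: "real set" and g :: "real \<Rightarrow> real"
  assumes mono: "\<forall>x\<in>X. \<forall>y\<in>X. x < y \<longrightarrow> g x < g y" and H: "Hgap (g ` X) r"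
    and a: "a \<in> X" and e: "\<epsilon> > 0" and r0: "r \<ge> 0"
  shows "\<exists>\<delta>>0. \<forall>x\<in>X. a < x \<and> x < a + \<delta> \<longrightarrow> g x - g a < r + \<epsilon>"
proof (cases "{x\<in>X. x > a} = {}")
  case True
  then show ?thesis by (intro exI[of _ 1]) auto
next
  case False
  define S where "S = g ` {x\<in>X. x > a}"
  have Sne: "S \<noteq> {}" using False by (simp add: S_def)
  have bS: "\<And>s. s \<in> S \<Longrightarrow> g a < s" using mono a by (auto simp: S_def)
  have bdd: "bdd_below S" by (rule bdd_belowI[of _ "g a"]) (simp add: bS less_imp_le)
  define L where "L = Inf S"
  have gaL: "g a \<le> L" unfolding L_def using Sne bS by (auto intro: cInf_greatest less_imp_le)
  have Lle: "\<And>s. s \<in> S \<Longrightarrow> L \<le> s" unfolding L_def using bdd by (auto intro: cInf_lower)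
  have Lr: "L - g a \<le> r"
  proof (cases "L = g a")
    case True
    then show ?thesis using r0 by simp
  next
    case False
    obtain s where s: "s \<in> S" using Sne by auto
    have "{g a<..<L} \<inter> g ` X = {}"
    proof (rule ccontr)
      assume "{g a<..<L} \<inter> g ` X \<noteq> {}"
      then obtain x where x: "x \<in> X" "g a < g x" "g x < L" by auto
      show False
      proof (cases "x > a")
        case True
        then have "g x \<in> S" using x by (auto simp: S_def)
        then show False using Lle x by force
      next
        case False
        then have "x < a \<or> x = a" by linarith
        then have "g x \<le> g a"
        proof
          assume "x < a" then show ?thesis using mono x(1) a by (simp add: less_imp_le)
        qed simp
        then show False using x by simp
      qed
    qed
    moreover have "s \<in> g ` X" using s by (auto simp: S_def)
    ultimately have "L - g a < r" using H[unfolded Hgap_def, rule_format, of "g a" s "g a" L] gaL False Lle[OF s] a by auto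
    then show ?thesis by simp
  qed
  have "L < L + \<epsilon>" using e by simp
  then obtain s where s: "s \<in> S" "s < L + \<epsilon>" using cInf_lessD[OF Sne] unfolding L_def by blast
  then obtain x0 where x0: "x0 \<in> X" "x0 > a" "s = g x0" by (auto simp: S_def)
  show ?thesis
  proof (intro exI[of _ "x0 - a"] conjI ballI impI)
    show "0 < x0 - a" using x0 by simp
    fix x assume "x \<in> X" "a < x \<and> x < a + (x0 - a)"
    then have "g x < g x0" using mono x0 by auto
    then show "g x - g a < r + \<epsilon>" using s x0 Lr by linarith
  qed
qed

lemma both_sides:
  fixes X :: "real set" and g :: "real \<Rightarrow> real"
  assumes mono: "\<forall>x\<in>X. \<forall>y\<in>X. x < y \<longrightarrow> g x < g y" and H: "Hgap (g ` X) r"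
    and a: "a \<in> X" and e: "\<epsilon> > 0" and r0: "r \<ge> 0"
  shows "\<exists>\<delta>>0. \<forall>x\<in>X. \<bar>x - a\<bar> < \<delta> \<longrightarrow> \<bar>g x - g a\<bar> < r + \<epsilon>"
proof -
  obtain d1 where d1: "d1 > 0" "\<forall>x\<in>X. a < x \<and> x < a + d1 \<longrightarrow> g x - g a < r + \<epsilon>"
    using right_side[OF mono H a e r0] by blast
  define X' where "X' = uminus ` X"
  define g' where "g' = (\<lambda>x. - g (- x))"
  have mono': "\<forall>x\<in>X'. \<forall>y\<in>X'. x < y \<longrightarrow> g' x < g' y" using mono by (auto simp: X'_def g'_def)
  have img: "g' ` X' = uminus ` (g ` X)" by (auto simp: X'_def g'_def image_image)
  have H': "Hgap (g' ` X') r" unfolding img by (rule Hgap_neg[OF H])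
  have a': "-a \<in> X'" using a by (simp add: X'_def)
  obtain d2 where d2: "d2 > 0" "\<forall>x\<in>X'. -a < x \<and> x < -a + d2 \<longrightarrow> g' x - g' (-a) < r + \<epsilon>"
    using right_side[OF mono' H' a' e r0] by blast
  show ?thesis
  proof (intro exI[of _ "min d1 d2"] conjI ballI impI)
    show "0 < min d1 d2" using d1 d2 by simp
    fix x assume x: "x \<in> X" "\<bar>x - a\<bar> < min d1 d2"
    consider "x = a" | "a < x" | "x < a" by linarith
    then show "\<bar>g x - g a\<bar> < r + \<epsilon>"
    proof cases
      case 1
      then show ?thesis using r0 e by simp
    next
      case 2
      have "g x - g a < r + \<epsilon>" using d1 x 2 by auto
      moreover have "g a < g x" using mono x a 2 by auto
      ultimately show ?thesis by simp
    next
      case 3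
      have "-x \<in> X'" using x by (simp add: X'_def)
      then have "g' (-x) - g' (-a) < r + \<epsilon>" using d2 x 3 by auto
      moreover have "g x < g a" using mono x 3 a by auto
      ultimately show ?thesis by (simp add: g'_def)
    qed
  qed
qed

theorem theorem8:
  fixes I X :: "real set" and q r :: real and f :: "real \<Rightarrow> real"
  assumes "is_interval I" and "X \<subseteq> I" and "q \<ge> 0" and "r \<ge> 0"
    and "(\<forall>x\<in>X. \<forall>y\<in>X. x < y \<longrightarrow> f x < f y) \<or> (\<forall>x\<in>X. \<forall>y\<in>X. x < y \<longrightarrow> f x > f y)"
    and "\<forall>J. gap X J \<and> bounded J \<longrightarrow> gap_length J < q"
    and "\<forall>J. gap (f ` X) J \<and> bounded J \<longrightarrow> gap_length J < r"
  shows "r_continuous_on X f r"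
  unfolding r_continuous_on_def r_continuous_at_def
proof (intro ballI allI impI)
  fix a \<epsilon> :: real assume a: "a \<in> X" and e: "\<epsilon> > 0"
  have H: "Hgap (f ` X) r" using Hgap_from assms(7) by blast
  show "\<exists>\<delta>>0. \<forall>x\<in>X. \<bar>x - a\<bar> < \<delta> \<longrightarrow> \<bar>f x - f a\<bar> < r + \<epsilon>"
    using assms(5)
  proof
    assume m: "\<forall>x\<in>X. \<forall>y\<in>X. x < y \<longrightarrow> f x < f y"
    show ?thesis by (rule both_sides[OF m H a e assms(4)])
  next
    assume m: "\<forall>x\<in>X. \<forall>y\<in>X. x < y \<longrightarrow> f x > f y"
    have m': "\<forall>x\<in>X. \<forall>y\<in>X. x < y \<longrightarrow> (\<lambda>x. - f x) x < (\<lambda>x. - f x) y" using m by auto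
    have img: "(\<lambda>x. - f x) ` X = uminus ` (f ` X)" by (auto simp: image_image)
    have H': "Hgap ((\<lambda>x. - f x) ` X) r" unfolding img by (rule Hgap_neg[OF H])
    from both_sides[OF m' H' a e assms(4)] show ?thesis by (simp add: abs_minus_commute) 
  qed
qed

end
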